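(* (a) The optimal value function $\mu$ is upper semicontinuous at $0$. (b) If $X^\infty\cap\mathcal{K}(f)=\{0\}$, then $\mu$ is lower semicontinuous at $0$, and hence continuous at $0$.
   Context: Standing assumptions: $f:\mathbb{R}^n\to\mathbb{R}\cup\{\pm\infty\}$ is proper (never $-\infty$ and finite at some point) and lower semicontinuous; $X\subset\mathbb{R}^n$ is a nonempty closed set with $\operatorname{dom}f\cap X$ unbounded. $X^\infty=\{u:\exists t_k\to+\infty,\ \exists x_k\in X,\ x_k/t_k\to u\}$; $f^\infty(d)=\inf\{\liminf_{k} f(t_kd_k)/t_k:\ t_k\to+\infty,\ d_k\to d\}$; $\mathcal{K}(f)=\{d: f^\infty(d)\le 0\}$. For $u\in\mathbb{R}^n$, $f_u(x)=f(x)-\langle u,x\rangle$, and the optimal value function is $\mu(u)=\inf_{x\in X}f_u(x)$ (valued in $\mathbb{R}\cup\{\pm\infty\}$). Upper/lower semicontinuity of $\mu$ at $0$ means $\limsup_{u\to0}\mu(u)\le\mu(0)$ / $\liminf_{u\to0}\mu(u)\ge\mu(0)$. *)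

theory Defs
  imports "HOL-Analysis.Analysis" "HOL-Library.Extended_Real"
begin

definition proper_fun :: "('a \<Rightarrow> ereal) \<Rightarrow> bool" where
  "proper_fun f \<longleftrightarrow> (\<forall>x. f x \<noteq> -\<infinity>) \<and> (\<exists>x. f x \<noteq> \<infinity>)"

definition lsc_fun :: "('a::topological_space \<Rightarrow> ereal) \<Rightarrow> bool" where
  "lsc_fun f \<longleftrightarrow> (\<forall>x. f x \<le> Liminf (at x) f)"

definition effdom :: "('a \<Rightarrow> ereal) \<Rightarrow> 'a set" where
  "effdom f = {x. f x < \<infinity>}"

definition asymp_cone :: "'a::real_normed_vector set \<Rightarrow> 'a set" where
  "asymp_cone X = {u. \<exists>t x. filterlim t at_top sequentially \<and> (\<forall>k. x k \<in> X) \<and>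
        (\<lambda>k. x k /\<^sub>R t k) \<longlonglongrightarrow> u}"

definition asymp_fun :: "('a::real_normed_vector \<Rightarrow> ereal) \<Rightarrow> 'a \<Rightarrow> ereal" where
  "asymp_fun f d = Inf {Liminf sequentially (\<lambda>k. f (t k *\<^sub>R dd k) / ereal (t k)) | t dd.
        filterlim t at_top sequentially \<and> dd \<longlonglongrightarrow> d}"

definition Kset :: "('a::real_normed_vector \<Rightarrow> ereal) \<Rightarrow> 'a set" where
  "Kset f = {d. asymp_fun f d \<le> 0}"

definition optval :: "('a::real_inner \<Rightarrow> ereal) \<Rightarrow> 'a set \<Rightarrow> 'a \<Rightarrow> ereal" where
  "optval f X u = (INF x\<in>X. f x - ereal (u \<bullet> x))"

end

theory Submission
  imports Defs
begin

lemma lsc_seq: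
  fixes f :: "'a::euclidean_space \<Rightarrow> ereal"
  assumes "lsc_fun f" "y \<longlonglongrightarrow> l" "z < f l"
  shows "eventually (\<lambda>n. z < f (y n)) sequentially"
proof -
  have "f l \<le> Liminf (at l) f" using assms(1) unfolding lsc_fun_def by blast
  then have "eventually (\<lambda>x. z < f x) (at l)" using assms(3) le_Liminf_iff by blast
  then have ev: "eventually (\<lambda>x. z < f x) (nhds l)"
    using assms(3) unfolding eventually_at_filter by (auto elim: eventually_mono)
  show ?thesis using filterlim_iff[THEN iffD1, OF assms(2), rule_format, OF ev] by simp
qed

lemma core_seq:
  fixes f :: "'a::euclidean_space \<Rightarrow> ereal" and X :: "'a set"
  assumes pf: "proper_fun f" and lsc: "lsc_fun f" and cl: "closed X"
    and K: "asymp_cone X \<inter> Kset f = {0}"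
    and u: "u \<longlonglongrightarrow> 0" and xX: "\<And>n. x n \<in> X"
    and lt: "\<And>n. f (x n) - ereal (u n \<bullet> x n) < ereal c"
  shows "\<exists>z\<in>X. f z \<le> ereal c"
proof -
  have fin: "f (x n) = ereal (real_of_ereal (f (x n)))" for n
  proof -
    have "f (x n) \<noteq> -\<infinity>" using pf unfolding proper_fun_def by blast
    moreover have "f (x n) \<noteq> \<infinity>" using lt[of n] by auto
    ultimately show ?thesis by (cases "f (x n)") auto
  qed
  define g where "g n = real_of_ereal (f (x n))" for n
  have glt: "g n < c + u n \<bullet> x n" for n
  proof -
    have "ereal (g n) - ereal (u n \<bullet> x n) < ereal c" using lt[of n] fin[of n] unfolding g_def by simp
    then have "g n - u n \<bullet> x n < c" by simp
    then show ?thesis by simp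
  qed
  show ?thesis
  proof (cases "\<exists>B. \<not> eventually (\<lambda>n. B < norm (x n)) sequentially")
    case True
    then obtain B where "\<not> eventually (\<lambda>n. B < norm (x n)) sequentially" by blast
    from not_eventually_sequentiallyD[OF this] obtain r :: "nat \<Rightarrow> nat"
      where r: "strict_mono r" "\<And>n. norm (x (r n)) \<le> B" by (meson not_less)
    have "bounded (range (x \<circ> r))" using r(2) unfolding bounded_iff by auto
    from bounded_imp_convergent_subsequence[OF this] obtain l s where
      s: "strict_mono s" "((x \<circ> r) \<circ> s) \<longlonglongrightarrow> l" by blast
    define y where "y = (x \<circ> r) \<circ> s"
    define v where "v = (u \<circ> r) \<circ> s"
    have yl: "y \<longlonglongrightarrow> l" using s y_def by simp
    have "l \<in> X" by (rule closed_sequentially[OF cl _ yl]) (simp add: y_def xX)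
    have v0: "v \<longlonglongrightarrow> 0" unfolding v_def
      using LIMSEQ_subseq_LIMSEQ[OF LIMSEQ_subseq_LIMSEQ[OF u r(1)] s(1)] .
    have "f l \<le> ereal c"
    proof (rule ccontr)
      assume "\<not> ?thesis"
      then have "ereal c < f l" by simp
      then obtain z where z: "ereal c < ereal z" "ereal z < f l" using ereal_dense2 by blast
      have ev1: "eventually (\<lambda>n. ereal z < f (y n)) sequentially" using lsc_seq[OF lsc yl z(2)] .
      have "(\<lambda>n. c + v n \<bullet> y n) \<longlonglongrightarrow> c + 0 \<bullet> l"
        by (intro tendsto_intros v0 yl)
      then have "eventually (\<lambda>n. c + v n \<bullet> y n < z) sequentially"
        using z(1) by (intro order_tendstoD) auto
      with ev1 have "eventually (\<lambda>n. False) sequentially"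
      proof (rule eventually_elim2)
        fix n assume a: "ereal z < f (y n)" "c + v n \<bullet> y n < z"
        have "f (y n) = ereal (g ((r \<circ> s) n))" "g ((r \<circ> s) n) < c + v n \<bullet> y n"
          using fin glt unfolding g_def y_def v_def by auto
        with a show False by auto
      qed
      then show False by simp
    qed
    with \<open>l \<in> X\<close> show ?thesis by blast
  next
    case False
    then have evB: "\<And>B. eventually (\<lambda>n. B < norm (x n)) sequentially" by blast
    define t where "t n = norm (x n)" for n
    define d where "d n = x n /\<^sub>R t n" for n
    have tinf: "filterlim t at_top sequentially"
      unfolding filterlim_at_top_dense t_def using evB by blast
    have "norm (d n) \<le> 1" for n
      unfolding d_def t_def by (cases "x n = 0") auto
    then have "bounded (range d)" unfolding bounded_iff by auto
    from bounded_imp_convergent_subsequence[OF this] obtain e s where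
      s: "strict_mono s" "(d \<circ> s) \<longlonglongrightarrow> e" by blast
    have ts: "filterlim (t \<circ> s) at_top sequentially"
      using filterlim_compose[OF tinf filterlim_subseq[OF s(1)]] by (simp add: comp_def)
    have evpos: "eventually (\<lambda>n. 0 < t (s n)) sequentially"
      using ts by (simp add: filterlim_at_top_dense comp_def)
    have nl: "(\<lambda>n. norm ((d \<circ> s) n)) \<longlonglongrightarrow> norm e" by (intro tendsto_intros s(2))
    have eq1: "eventually (\<lambda>n. norm ((d \<circ> s) n) = 1) sequentially"
      using evpos by eventually_elim (auto simp: d_def t_def)
    have "(\<lambda>n. 1::real) \<longlonglongrightarrow> norm e"
      using nl unfolding tendsto_cong[OF eq1] .
    then have "norm e = 1" using LIMSEQ_unique[OF tendsto_const] by metis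
    then have "e \<noteq> 0" by auto
    have "e \<in> asymp_cone X"
      unfolding asymp_cone_def
      apply (rule CollectI, rule exI[of _ "t \<circ> s"], rule exI[of _ "x \<circ> s"])
    proof (intro conjI allI)
      have "(\<lambda>k. (x \<circ> s) k /\<^sub>R (t \<circ> s) k) = d \<circ> s" by (simp add: d_def fun_eq_iff)
      then show "(\<lambda>k. (x \<circ> s) k /\<^sub>R (t \<circ> s) k) \<longlonglongrightarrow> e" using s(2) by simp
    qed (use ts xX in simp_all)
    moreover have "e \<in> Kset f"
    proof -
      let ?L = "Liminf sequentially (\<lambda>k. f ((t \<circ> s) k *\<^sub>R (d \<circ> s) k) / ereal ((t \<circ> s) k))"
      have "asymp_fun f e \<le> ?L"
        unfolding asymp_fun_def
        by (rule Inf_lower, rule CollectI, rule exI[of _ "t \<circ> s"], rule exI[of _ "d \<circ> s"])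
           (intro conjI refl ts s(2))
      also have "?L \<le> Limsup sequentially (\<lambda>k. f ((t \<circ> s) k *\<^sub>R (d \<circ> s) k) / ereal ((t \<circ> s) k))"
        by (rule Liminf_le_Limsup) simp
      also have "\<dots> \<le> 0"
        unfolding Limsup_le_iff
      proof (intro allI impI)
        fix y :: ereal assume "0 < y"
        then obtain w where w: "0 < ereal w" "ereal w < y" using ereal_dense2 by blast
        have "(\<lambda>n. c / t (s n) + u (s n) \<bullet> d (s n)) \<longlonglongrightarrow> 0 + 0 \<bullet> e"
        proof (intro tendsto_intros)
          show "(\<lambda>n. c / t (s n)) \<longlonglongrightarrow> 0"
            using tendsto_divide_0[OF tendsto_const filterlim_at_top_imp_at_infinity[OF ts], of c]
            by (simp add: comp_def)
          show "(\<lambda>n. u (s n)) \<longlonglongrightarrow> 0" using LIMSEQ_subseq_LIMSEQ[OF u s(1)] by (simp add: comp_def)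
          show "(\<lambda>n. d (s n)) \<longlonglongrightarrow> e" using s(2) by (simp add: comp_def)
        qed
        then have "eventually (\<lambda>n. c / t (s n) + u (s n) \<bullet> d (s n) < w) sequentially"
          using w(1) by (intro order_tendstoD) auto
        with evpos show "eventually (\<lambda>n. f ((t \<circ> s) n *\<^sub>R (d \<circ> s) n) / ereal ((t \<circ> s) n) < y) sequentially"
        proof eventually_elim
          case (elim n)
          let ?m = "s n"
          have xe: "t ?m *\<^sub>R d ?m = x ?m" using elim(1) by (simp add: d_def)
          have "g ?m / t ?m < (c + u ?m \<bullet> x ?m) / t ?m"
            using glt[of ?m] elim(1) by (simp add: divide_strict_right_mono)
          also have "(c + u ?m \<bullet> x ?m) / t ?m = c / t ?m + u ?m \<bullet> d ?m"
            using elim(1) by (simp add: d_def add_divide_distrib inner_scaleR_right divide_inverse algebra_simps)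
          finally have "g ?m / t ?m < w" using elim(2) by simp
          then have "ereal (g ?m / t ?m) < y" using w(2) by (meson ereal_less_eq(3) less_imp_le order_le_less_trans)
          moreover have "f (x ?m) / ereal (t ?m) = ereal (g ?m / t ?m)"
          proof -
            have "f (x ?m) = ereal (g ?m)" using fin[of ?m] unfolding g_def .
            then show ?thesis using elim(1) by simp
          qed
          ultimately show ?case using xe by (simp add: comp_def)
        qed
      qed
      finally show ?thesis unfolding Kset_def by simp
    qed
    ultimately show ?thesis using K \<open>e \<noteq> 0\<close> by blast
  qed
qed


theorem mainTheorem8:
  fixes f :: "'a::euclidean_space \<Rightarrow> ereal" and X :: "'a set"
  assumes "proper_fun f" and "lsc_fun f"
    and "closed X" and "X \<noteq> {}" and "\<not> bounded (effdom f \<inter> X)"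
  shows "Limsup (at 0) (optval f X) \<le> optval f X 0
    \<and> (asymp_cone X \<inter> Kset f = {0} \<longrightarrow>
         optval f X 0 \<le> Liminf (at 0) (optval f X)
         \<and> (optval f X \<longlongrightarrow> optval f X 0) (at 0))"
proof -
  have mu0: "optval f X 0 = (INF x\<in>X. f x)" by (simp add: optval_def)
  have muub: "optval f X u \<le> f x - ereal (u \<bullet> x)" if "x \<in> X" for u x
    unfolding optval_def by (rule INF_lower[OF that])
  have A: "Limsup (at 0) (optval f X) \<le> optval f X 0"
    unfolding Limsup_le_iff
  proof (intro allI impI)
    fix y assume "optval f X 0 < y"
    then obtain x where x: "x \<in> X" "f x < y" unfolding mu0 INF_less_iff by blast
    have "f x \<noteq> -\<infinity>" using assms(1) unfolding proper_fun_def by blast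
    moreover have "f x \<noteq> \<infinity>" using x(2) by auto
    ultimately obtain r where r: "f x = ereal r" by (cases "f x") auto
    have "((\<lambda>u. ereal (r - u \<bullet> x)) \<longlongrightarrow> ereal (r - 0 \<bullet> x)) (at 0)"
      by (intro tendsto_intros)
    moreover have "ereal (r - 0 \<bullet> x) < y" using x(2) r by simp
    ultimately have "eventually (\<lambda>u. ereal (r - u \<bullet> x) < y) (at 0)"
      by (rule order_tendstoD(2))
    then show "eventually (\<lambda>u. optval f X u < y) (at 0)"
    proof (rule eventually_mono)
      fix u assume "ereal (r - u \<bullet> x) < y"
      moreover have "optval f X u \<le> ereal (r - u \<bullet> x)" using muub[OF x(1), of u] r by simp
      ultimately show "optval f X u < y" by simp
    qed
  qed
  have B: "optval f X 0 \<le> Liminf (at 0) (optval f X)" if K: "asymp_cone X \<inter> Kset f = {0}"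
    unfolding le_Liminf_iff
  proof (intro allI impI)
    fix y assume "y < optval f X 0"
    then obtain c where c: "y < ereal c" "ereal c < optval f X 0" using ereal_dense2 by blast
    then obtain c2 where c2: "ereal c < ereal c2" "ereal c2 < optval f X 0" using ereal_dense2 by blast
    have "eventually (\<lambda>u. ereal c < optval f X u) (at 0)"
    proof (rule sequentially_imp_eventually_at, intro allI impI)
      fix v :: "nat \<Rightarrow> 'a" assume v: "(\<forall>n. v n \<noteq> 0) \<and> v \<longlonglongrightarrow> 0"
      show "eventually (\<lambda>n. ereal c < optval f X (v n)) sequentially"
      proof (rule ccontr)
        assume "\<not> ?thesis"
        from not_eventually_sequentiallyD[OF this] obtain r :: "nat \<Rightarrow> nat"
          where r: "strict_mono r" "\<And>n. \<not> ereal c < optval f X (v (r n))" by blast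
        have "\<forall>n. \<exists>x. x \<in> X \<and> f x - ereal (v (r n) \<bullet> x) < ereal c2"
        proof
          fix n
          have "optval f X (v (r n)) < ereal c2" using r(2)[of n] c2(1) by (meson not_less order_le_less_trans)
          then show "\<exists>x. x \<in> X \<and> f x - ereal (v (r n) \<bullet> x) < ereal c2"
            unfolding optval_def INF_less_iff by blast
        qed
        then obtain xs where xs: "\<And>n. xs n \<in> X" "\<And>n. f (xs n) - ereal ((v \<circ> r) n \<bullet> xs n) < ereal c2"
          by (metis comp_apply)
        have "(v \<circ> r) \<longlonglongrightarrow> 0" using LIMSEQ_subseq_LIMSEQ[OF conjunct2[OF v] r(1)] .
        from core_seq[OF assms(1,2,3) K this xs] obtain z where z: "z \<in> X" "f z \<le> ereal c2" by blast
        have "optval f X 0 \<le> f z" unfolding mu0 by (rule INF_lower[OF z(1)])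
        with z(2) c2(2) show False by simp
      qed
    qed
    then show "eventually (\<lambda>u. y < optval f X u) (at 0)"
      by (rule eventually_mono) (use c(1) in auto)
  qed
  show ?thesis
  proof (intro conjI impI A B)
    assume K: "asymp_cone X \<inter> Kset f = {0}"
    have "Liminf (at 0) (optval f X) \<le> Limsup (at 0) (optval f X)"
      by (rule Liminf_le_Limsup) simp
    then have "Liminf (at 0) (optval f X) = optval f X 0" "Limsup (at 0) (optval f X) = optval f X 0"
      using A B[OF K] by auto
    then show "(optval f X \<longlongrightarrow> optval f X 0) (at 0)"
      by (subst tendsto_iff_Liminf_eq_Limsup) auto
  qed
qed

end
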